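(* Let $g,h$ be non-identical linear functions. Then (i) $h\circ g<g\circ h$ if and only if $\theta(h)-\theta(g)\in(0,\pi)_{2\pi}$; and (ii) $h\circ g=g\circ h$ if and only if $\theta(h)-\theta(g)\in\{0,\pi\}_{2\pi}$.
   Context: A linear function is $f(x)=ax+b$, $a,b\in\mathbb{R}$; it is identical if $f(x)=x$. The vector of $f$ is $\vec f=(b,1-a)^\top$ and $\theta(f)\in[0,2\pi)$ is its polar angle ($\theta(f)=\bot$ if $\vec f=0$). For $\theta_1,\theta_2$, $\theta_1=_{2\pi}\theta_2$ means $\theta_1-\theta_2\in2\pi\mathbb{Z}$; $[\theta_1,\theta_2]_{2\pi}=\{\theta\in[\lambda_1,\lambda_2]\mid\lambda_1=_{2\pi}\theta_1,\lambda_2=_{2\pi}\theta_2,\lambda_2-\lambda_1\in[0,2\pi)\}$ with open/half-open analogues, and for a set $S$, $S_{2\pi}=\{\theta\mid\theta=_{2\pi}\lambda\text{ for some }\lambda\in S\}$. For functions, $g<h$ means $g(x)<h(x)$ for all $x$. *)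

theory Defs
  imports Complex_Main
begin

definition linfun :: "real \<Rightarrow> real \<Rightarrow> (real \<Rightarrow> real)" where
  "linfun a b = (\<lambda>x. a * x + b)"

definition linvec :: "real \<Rightarrow> real \<Rightarrow> real \<times> real" where
  "linvec a b = (b, 1 - a)"

text \<open>Polar angle in [0, 2 pi) of a nonzero plane vector (unspecified for the zero vector).\<close>
definition polar_angle :: "real \<times> real \<Rightarrow> real" where
  "polar_angle v = (THE t. 0 \<le> t \<and> t < 2 * pi \<and>
      (\<exists>r>0. fst v = r * cos t \<and> snd v = r * sin t))"

definition theta :: "real \<Rightarrow> real \<Rightarrow> real" where
  "theta a b = polar_angle (linvec a b)"

definition mod2pi :: "real set \<Rightarrow> real set" where
  "mod2pi S = {t. \<exists>l\<in>S. \<exists>k::int. t - l = 2 * pi * of_int k}"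

definition fun_lt :: "(real \<Rightarrow> real) \<Rightarrow> (real \<Rightarrow> real) \<Rightarrow> bool" where
  "fun_lt g h \<longleftrightarrow> (\<forall>x. g x < h x)"

end

theory Submission
  imports Defs
begin

lemma sin_rot: "sin (l + 2 * pi * of_int k) = sin l"
  by (simp add: sin_add)

lemma sin_pos_iff: "0 < sin d \<longleftrightarrow> d \<in> mod2pi {0<..<pi}"
proof
  assume s: "0 < sin d"
  define k where "k = floor (d / (2*pi))"
  define l where "l = d - 2*pi*of_int k"
  have k1: "of_int k \<le> d/(2*pi)" "d/(2*pi) < of_int k + 1" unfolding k_def by linarith+
  have "2*pi*of_int k \<le> d" using k1(1) pi_gt_zero by (simp add: field_simps)
  moreover have "d < 2*pi*(of_int k + 1)" using k1(2) pi_gt_zero by (simp add: field_simps)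
  ultimately have l: "0 \<le> l" "l < 2*pi" unfolding l_def by (auto simp: algebra_simps)
  have sl: "sin l = sin d" using sin_rot[of l k] unfolding l_def by simp
  have "l < pi"
  proof (rule ccontr)
    assume "\<not> l < pi" then have "sin l \<le> 0" using sin_le_zero l by simp
    thus False using s sl by simp
  qed
  moreover have "l \<noteq> 0" using s sl by auto
  ultimately have "l \<in> {0<..<pi}" "d - l = 2*pi*of_int k" using l l_def by auto
  then show "d \<in> mod2pi {0<..<pi}" unfolding mod2pi_def by blast
next
  assume "d \<in> mod2pi {0<..<pi}"
  then obtain l k where l: "0 < l" "l < pi" and "d - l = 2*pi*of_int k" unfolding mod2pi_def by auto
  then have "d = l + 2*pi*of_int k" by simp
  then show "0 < sin d" using sin_rot sin_gt_zero l by simp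
qed

lemma sin_zero_iff': "sin d = 0 \<longleftrightarrow> d \<in> mod2pi {0, pi}"
proof
  assume "sin d = 0"
  then obtain i :: int where i: "d = of_int i * pi" using sin_zero_iff_int2 by auto
  show "d \<in> mod2pi {0, pi}"
  proof (cases "even i")
    case True
    then obtain m where "i = 2*m" by auto
    then have "d - 0 = 2*pi*of_int m" using i by simp
    then show ?thesis unfolding mod2pi_def by blast
  next
    case False
    then obtain m where "i = 2*m+1" using oddE by blast
    then have "d - pi = 2*pi*of_int m" using i by (simp add: algebra_simps)
    then show ?thesis unfolding mod2pi_def by blast
  qed
next
  assume "d \<in> mod2pi {0, pi}"
  then obtain l k where l: "l = 0 \<or> l = pi" and "d - l = 2*pi*of_int k" unfolding mod2pi_def by blast
  then have "d = l + 2*pi*of_int k" by simp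
  then show "sin d = 0" using sin_rot l by auto
qed

lemma polar:
  fixes x y :: real
  assumes "(x, y) \<noteq> (0, 0)"
  shows "0 \<le> polar_angle (x,y) \<and> polar_angle (x,y) < 2*pi \<and>
    (\<exists>r>0. x = r * cos (polar_angle (x,y)) \<and> y = r * sin (polar_angle (x,y)))"
proof -
  define P where "P = (\<lambda>t. 0 \<le> t \<and> t < 2 * pi \<and>
      (\<exists>r>0. fst (x,y) = r * cos t \<and> snd (x,y) = r * sin t))"
  define r where "r = sqrt (x^2 + y^2)"
  have "x \<noteq> 0 \<or> y \<noteq> 0" using assms by auto
  then have xy: "x^2 + y^2 > 0" by (simp add: sum_power2_gt_zero_iff)
  then have r: "r > 0" unfolding r_def by simp
  have r2: "r^2 = x^2 + y^2" unfolding r_def by simp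
  have "(x/r)^2 + (y/r)^2 = (x^2+y^2)/r^2" by (simp add: power_divide add_divide_distrib)
  also have "\<dots> = 1" using xy r2 by (metis less_irrefl divide_self)
  finally have "(x/r)^2 + (y/r)^2 = 1" .
  then obtain t where t: "0 \<le> t" "t < 2*pi" "x/r = cos t" "y/r = sin t"
    using sincos_total_2pi by blast
  have ex: "P t" unfolding P_def using t r by (auto intro!: exI[of _ r] simp: field_simps)
  have uniq: "s = t" if "P s" for s
  proof -
    from that obtain q where s: "0 \<le> s" "s < 2*pi" "q > 0" "x = q * cos s" "y = q * sin s"
      unfolding P_def by auto
    have xr: "x = r * cos t" "y = r*sin t" using t r by (auto simp: field_simps)
    have e1: "x^2 + y^2 = q^2 * (cos s)^2 + q^2 * (sin s)^2" using s by (simp add: power_mult_distrib)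
    have e2: "q^2 * (cos s)^2 + q^2 * (sin s)^2 = q^2" by (metis distrib_left sin_cos_squared_add2 mult_1_right)
    have "q^2 = x^2 + y^2" using e1 e2 by simp
    then have "q^2 = r^2" using r2 by simp
    then have "q = r" using r s(3) by (simp add: power2_eq_iff_nonneg)
    then have cs: "cos s = cos t" "sin s = sin t" using s xr r by auto
    have "cos (s - t) = (cos t)^2 + (sin t)^2" using cs by (simp add: cos_diff power2_eq_square)
    then have "cos (s - t) = 1" by simp
    then obtain n :: int where n: "s - t = real_of_int n * 2 * pi" using cos_one_2pi_int by blast
    have "-2*pi < s - t" "s - t < 2*pi" using s t by auto
    then have i1: "(-1) * (2*pi) < real_of_int n * (2*pi)" "real_of_int n * (2*pi) < 1 * (2*pi)" using n by (simp_all add: mult.assoc)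
    have pp: "(0::real) < 2*pi" by simp
    have "-1 < real_of_int n" using i1(1) by (simp only: mult_less_cancel_right_pos[OF pp])
    moreover have "real_of_int n < 1" using i1(2) by (simp only: mult_less_cancel_right_pos[OF pp])
    ultimately
    have "n = 0" by linarith
    then show ?thesis using n by simp
  qed
  have "P (polar_angle (x,y))" unfolding polar_angle_def P_def[symmetric]
    using ex uniq by (rule theI)
  then show ?thesis unfolding P_def by simp
qed

theorem mainTheorem6:
  fixes a1 b1 a2 b2 :: real
  defines "g \<equiv> linfun a1 b1" and "h \<equiv> linfun a2 b2"
  assumes "g \<noteq> id" and "h \<noteq> id"
  shows "(fun_lt (h \<circ> g) (g \<circ> h) \<longleftrightarrow>
            theta a2 b2 - theta a1 b1 \<in> mod2pi {0<..<pi})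
       \<and> (h \<circ> g = g \<circ> h \<longleftrightarrow>
            theta a2 b2 - theta a1 b1 \<in> mod2pi {0, pi})"
proof -
  have n1: "(b1, 1 - a1) \<noteq> (0,0)"
  proof
    assume "(b1, 1 - a1) = (0,0)"
    then have "g = id" unfolding g_def linfun_def by (auto simp: fun_eq_iff)
    then show False using assms by simp
  qed
  have n2: "(b2, 1 - a2) \<noteq> (0,0)"
  proof
    assume "(b2, 1 - a2) = (0,0)"
    then have "h = id" unfolding h_def linfun_def by (auto simp: fun_eq_iff)
    then show False using assms by simp
  qed
  define t1 where "t1 = theta a1 b1"
  define t2 where "t2 = theta a2 b2"
  obtain r1 where r1: "r1 > 0" "b1 = r1 * cos t1" "1 - a1 = r1 * sin t1"
    using polar[OF n1] unfolding t1_def theta_def linvec_def by auto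
  obtain r2 where r2: "r2 > 0" "b2 = r2 * cos t2" "1 - a2 = r2 * sin t2"
    using polar[OF n2] unfolding t2_def theta_def linvec_def by auto
  define c where "c = b1 * (1 - a2) - b2 * (1 - a1)"
  have c: "c = r1 * r2 * sin (t2 - t1)" unfolding c_def r1 r2
    by (simp add: sin_diff algebra_simps)
  have rr: "r1 * r2 > 0" using r1 r2 by simp
  have pos: "0 < c \<longleftrightarrow> 0 < sin (t2 - t1)" using c rr by (metis mult_pos_pos zero_less_mult_pos)
  have zer: "c = 0 \<longleftrightarrow> sin (t2 - t1) = 0" using c r1 r2 by simp
  have hg: "\<And>x. (h \<circ> g) x = a2*a1*x + a2*b1 + b2" "\<And>x. (g \<circ> h) x = a2*a1*x + a1*b2 + b1"
    unfolding g_def h_def linfun_def by (auto simp: algebra_simps)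
  have L1: "fun_lt (h \<circ> g) (g \<circ> h) \<longleftrightarrow> 0 < c"
    unfolding fun_lt_def hg c_def by (auto simp: algebra_simps)
  have L2: "h \<circ> g = g \<circ> h \<longleftrightarrow> c = 0"
  proof
    assume "h \<circ> g = g \<circ> h"
    then have "(h \<circ> g) 0 = (g \<circ> h) 0" by simp
    then show "c = 0" unfolding hg c_def by (simp add: algebra_simps)
  next
    assume "c = 0"
    then show "h \<circ> g = g \<circ> h" unfolding fun_eq_iff hg c_def by (simp add: algebra_simps)
  qed
  show ?thesis unfolding L1 L2 pos zer sin_pos_iff sin_zero_iff' t1_def t2_def by simp
qed

end
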